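(* Let $mG$ be a finite canonical misinformation game, $\Gamma=(\mathcal{AD}^*(\{mG\}),E)$ its adaptation graph, and $\Gamma'$ the graph obtained from $\Gamma$ by omitting self-loops. Let $mG'$ be the last node on a maximal path in $\Gamma'$ starting from $mG$. Then every natural misinformed equilibrium of $mG'$ is a stable misinformed equilibrium of $mG$.
   Context: A normal-form game is $G=\langle N,S,P\rangle$ with finite players $N$, finite pure strategy sets $S_i$, positions $S=\times_i S_i$, payoffs $P_i:S\to\mathbb{R}$. A misinformation game $mG=\langle G^0,G^1,\dots,G^{|N|}\rangle$ consists of the actual game $G^0$ and subjective games $G^i$; it is canonical if all $G^i=\langle N,S,P^i\rangle$ differ from $G^0$ only in payoffs and in every $G^i$ all players have equally many pure strategies. $NME(mG)$ (natural misinformed equilibria) is the set of profiles $\sigma=(\sigma_1,\dots,\sigma_{|N|})$ such that each $\sigma_i$ is player $i$'s component of some Nash equilibrium of $G^i$. $\chi(\sigma)=\mathrm{supp}(\sigma_1)\times\dots\times\mathrm{supp}(\sigma_{|N|})$. For $\vec v\in S$, $mG_{\vec v}$ is obtained by replacing, in every $P^i$ ($i\ge1$), the payoff vector at position $\vec v$ by $P^0(\vec v)$. For a set $M$ of misinformation games, $\mathcal{AD}(M)=\{mG_{\vec u}: mG\in M,\sigma\in NME(mG),\vec u\in\chi(\sigma)\}$, $\mathcal{AD}^{(0)}(M)=M$, $\mathcal{AD}^{(t+1)}(M)=\mathcal{AD}^{(t)}(\mathcal{AD}(M))$, $\mathcal{AD}^*(M)=\bigcup_{t\ge0}\mathcal{AD}^{(t)}(M)$;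 the length $\mathfrak{L}$ is the least $t\ge0$ with $\mathcal{AD}^{(t+1)}(M)=\mathcal{AD}^{(t)}(M)$ and $\mathcal{AD}^\infty(M)=\mathcal{AD}^{(\mathfrak{L})}(M)$. A profile $\sigma$ is a stable misinformed equilibrium of $mG$ if there is $\widehat{mG}\in\mathcal{AD}^\infty(\{mG\})$ with $\sigma\in NME(\widehat{mG})$ and $\widehat{mG}_{\vec v}=\widehat{mG}$ for all $\vec v\in\chi(\sigma)$. The adaptation graph $\Gamma$ has vertex set $\mathcal{AD}^*(\{mG\})$ and an edge $(mG^1,mG^2)$ iff $mG^2=(mG^1)_{\vec v}$ for some $\sigma\in NME(mG^1)$, $\vec v\in\chi(\sigma)$. A maximal path is a directed path that cannot be extended. *)

theory Defs
  imports Complex_Main "HOL-Library.FuncSet"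
begin

text \<open>
Players are 1..n; player i has pure strategies 0..<m i (the same in every game,
as the games differ only in payoffs).  The payoff system
P :: nat \<Rightarrow> (nat \<Rightarrow> nat) \<Rightarrow> nat \<Rightarrow> real  gives P k v i, the payoff of player i at
position v in game G^k; k = 0 is the actual game, k = i (1 \<le> i \<le> n) is the
subjective game of player i.  A misinformation game with fixed n, m is thus
identified with its payoff system P.
\<close>

definition positions :: "nat \<Rightarrow> (nat \<Rightarrow> nat) \<Rightarrow> (nat \<Rightarrow> nat) set" where
  "positions n m = PiE {1..n} (\<lambda>i. {..<m i})"

definition mixed_strategy :: "nat \<Rightarrow> (nat \<Rightarrow> real) \<Rightarrow> bool" where
  "mixed_strategy k \<tau> \<longleftrightarrow> (\<forall>s. 0 \<le> \<tau> s) \<and> (\<forall>s. k \<le> s \<longrightarrow> \<tau> s = 0) \<and> sum \<tau> {..<k} = 1"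

definition mixed_profile :: "nat \<Rightarrow> (nat \<Rightarrow> nat) \<Rightarrow> (nat \<Rightarrow> nat \<Rightarrow> real) \<Rightarrow> bool" where
  "mixed_profile n m \<sigma> \<longleftrightarrow>
     (\<forall>j \<in> {1..n}. mixed_strategy (m j) (\<sigma> j)) \<and> (\<forall>j. j \<notin> {1..n} \<longrightarrow> \<sigma> j = (\<lambda>_. 0))"

definition exp_payoff ::
  "nat \<Rightarrow> (nat \<Rightarrow> nat) \<Rightarrow> (nat \<Rightarrow> (nat \<Rightarrow> nat) \<Rightarrow> nat \<Rightarrow> real) \<Rightarrow> nat \<Rightarrow>
   (nat \<Rightarrow> nat \<Rightarrow> real) \<Rightarrow> nat \<Rightarrow> real" where
  "exp_payoff n m P k \<sigma> i = (\<Sum>v \<in> positions n m. (\<Prod>j \<in> {1..n}. \<sigma> j (v j)) * P k v i)"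

definition nash_eq ::
  "nat \<Rightarrow> (nat \<Rightarrow> nat) \<Rightarrow> (nat \<Rightarrow> (nat \<Rightarrow> nat) \<Rightarrow> nat \<Rightarrow> real) \<Rightarrow> nat \<Rightarrow>
   (nat \<Rightarrow> nat \<Rightarrow> real) \<Rightarrow> bool" where
  "nash_eq n m P k \<sigma> \<longleftrightarrow> mixed_profile n m \<sigma> \<and>
     (\<forall>i \<in> {1..n}. \<forall>\<tau>. mixed_strategy (m i) \<tau> \<longrightarrow>
        exp_payoff n m P k (\<sigma>(i := \<tau>)) i \<le> exp_payoff n m P k \<sigma> i)"

definition NME ::
  "nat \<Rightarrow> (nat \<Rightarrow> nat) \<Rightarrow> (nat \<Rightarrow> (nat \<Rightarrow> nat) \<Rightarrow> nat \<Rightarrow> real) \<Rightarrow> (nat \<Rightarrow> nat \<Rightarrow> real) set" where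
  "NME n m P = {\<sigma>. (\<forall>j. j \<notin> {1..n} \<longrightarrow> \<sigma> j = (\<lambda>_. 0)) \<and>
                    (\<forall>i \<in> {1..n}. \<exists>\<tau>. nash_eq n m P i \<tau> \<and> \<sigma> i = \<tau> i)}"

definition supp :: "(nat \<Rightarrow> real) \<Rightarrow> nat set" where
  "supp \<tau> = {s. \<tau> s \<noteq> 0}"

definition chi :: "nat \<Rightarrow> (nat \<Rightarrow> nat \<Rightarrow> real) \<Rightarrow> (nat \<Rightarrow> nat) set" where
  "chi n \<sigma> = PiE {1..n} (\<lambda>i. supp (\<sigma> i))"

definition adapt ::
  "nat \<Rightarrow> (nat \<Rightarrow> nat) \<Rightarrow> (nat \<Rightarrow> (nat \<Rightarrow> nat) \<Rightarrow> nat \<Rightarrow> real) \<Rightarrow>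
   (nat \<Rightarrow> (nat \<Rightarrow> nat) \<Rightarrow> nat \<Rightarrow> real)" where
  "adapt n v P = (\<lambda>k w i. if k \<in> {1..n} \<and> w = v \<and> i \<in> {1..n} then P 0 v i else P k w i)"

definition AD ::
  "nat \<Rightarrow> (nat \<Rightarrow> nat) \<Rightarrow> (nat \<Rightarrow> (nat \<Rightarrow> nat) \<Rightarrow> nat \<Rightarrow> real) set \<Rightarrow>
   (nat \<Rightarrow> (nat \<Rightarrow> nat) \<Rightarrow> nat \<Rightarrow> real) set" where
  "AD n m M = {adapt n u P | P \<sigma> u. P \<in> M \<and> \<sigma> \<in> NME n m P \<and> u \<in> chi n \<sigma>}"

definition AD_iter where
  "AD_iter n m t M = (AD n m ^^ t) M"

definition AD_star where
  "AD_star n m M = (\<Union>t. AD_iter n m t M)"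

definition AD_length where
  "AD_length n m M = (LEAST t. AD_iter n m (Suc t) M = AD_iter n m t M)"

definition AD_inf where
  "AD_inf n m M = AD_iter n m (AD_length n m M) M"

definition stable_ME ::
  "nat \<Rightarrow> (nat \<Rightarrow> nat) \<Rightarrow> (nat \<Rightarrow> (nat \<Rightarrow> nat) \<Rightarrow> nat \<Rightarrow> real) \<Rightarrow> (nat \<Rightarrow> nat \<Rightarrow> real) \<Rightarrow> bool" where
  "stable_ME n m P \<sigma> \<longleftrightarrow> (\<exists>Q \<in> AD_inf n m {P}. \<sigma> \<in> NME n m Q \<and> (\<forall>v \<in> chi n \<sigma>. adapt n v Q = Q))"

definition adapt_edges where
  "adapt_edges n m P = {(A, B). A \<in> AD_star n m {P} \<and>
       (\<exists>\<sigma> \<in> NME n m A. \<exists>v \<in> chi n \<sigma>. B = adapt n v A)}"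

definition adapt_edges' where
  "adapt_edges' n m P = {(A, B). (A, B) \<in> adapt_edges n m P \<and> A \<noteq> B}"

definition is_path :: "('a \<times> 'a) set \<Rightarrow> 'a list \<Rightarrow> bool" where
  "is_path E xs \<longleftrightarrow> xs \<noteq> [] \<and> distinct xs \<and> (\<forall>i. Suc i < length xs \<longrightarrow> (xs ! i, xs ! Suc i) \<in> E)"

definition maximal_path_from :: "('a \<times> 'a) set \<Rightarrow> 'a \<Rightarrow> 'a list \<Rightarrow> bool" where
  "maximal_path_from E x xs \<longleftrightarrow> is_path E xs \<and> hd xs = x \<and>
     \<not> (\<exists>w. (last xs, w) \<in> E \<and> w \<notin> set xs)"

end

theory Submission
  imports Defs
begin

definition stp where
  "stp n m A B \<longleftrightarrow> (\<exists>\<sigma>\<in>NME n m A. \<exists>v\<in>chi n \<sigma>. B = adapt n v A)"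

definition FF where "FF n Q = {v. adapt n v Q = Q}"

lemma adapt_idem: "adapt n v (adapt n v Q) = adapt n v Q"
  by (auto simp: adapt_def fun_eq_iff)

lemma adapt_comm: "adapt n u (adapt n v Q) = adapt n v (adapt n u Q)"
  unfolding adapt_def by (intro ext) auto

lemma AD_mem: "B \<in> AD n m M \<longleftrightarrow> (\<exists>A\<in>M. stp n m A B)"
  unfolding AD_def stp_def by blast

lemma chi_sub: assumes "\<sigma> \<in> NME n m A" shows "chi n \<sigma> \<subseteq> positions n m"
  unfolding chi_def positions_def
proof (rule PiE_mono)
  fix i assume i: "i \<in> {1..n}"
  then obtain \<tau> where t: "nash_eq n m A i \<tau>" "\<sigma> i = \<tau> i" using assms unfolding NME_def by blast
  then have "mixed_strategy (m i) (\<tau> i)" using i unfolding nash_eq_def mixed_profile_def by blast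
  then show "supp (\<sigma> i) \<subseteq> {..<m i}" using t unfolding mixed_strategy_def supp_def
  proof (intro subsetI)
    fix x assume a: "x \<in> {s. \<sigma> i s \<noteq> 0}" and b: "(\<forall>s. 0 \<le> \<tau> i s) \<and> (\<forall>s. m i \<le> s \<longrightarrow> \<tau> i s = 0) \<and> sum (\<tau> i) {..<m i} = 1"
    show "x \<in> {..<m i}"
    proof (rule ccontr)
      assume "x \<notin> {..<m i}"
      then have "m i \<le> x" by simp
      then show False using a b t(2) by simp
    qed
  qed
qed

lemma chi_ne: assumes "\<sigma> \<in> NME n m A" shows "chi n \<sigma> \<noteq> {}"
proof -
  have "supp (\<sigma> i) \<noteq> {}" if i: "i \<in> {1..n}" for i
  proof -
    obtain \<tau> where t: "nash_eq n m A i \<tau>" "\<sigma> i = \<tau> i" using assms i unfolding NME_def by blast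
    then have "mixed_strategy (m i) (\<tau> i)" using i unfolding nash_eq_def mixed_profile_def by blast
    then have "sum (\<tau> i) {..<m i} = 1" unfolding mixed_strategy_def by blast
    then obtain s where "\<tau> i s \<noteq> 0" by (metis sum.neutral zero_neq_one)
    then show ?thesis using t unfolding supp_def by auto
  qed
  then show ?thesis unfolding chi_def by (simp add: PiE_eq_empty_iff)
qed

lemma stp_FF: assumes "stp n m A B" shows "FF n A \<subseteq> FF n B"
  using assms unfolding stp_def FF_def
proof (intro subsetI CollectI)
  fix x assume "x \<in> {v. adapt n v A = A}"
  then have "adapt n x A = A" by simp
  moreover obtain \<sigma> v where "B = adapt n v A" using assms unfolding stp_def by blast
  ultimately show "adapt n x B = B" by (metis adapt_comm)
qed

lemma stp_strict: assumes "stp n m A B" "A \<noteq> B"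
  shows "FF n A \<inter> positions n m \<subset> FF n B \<inter> positions n m"
proof -
  obtain \<sigma> v where s: "\<sigma> \<in> NME n m A" "v \<in> chi n \<sigma>" "B = adapt n v A"
    using assms unfolding stp_def by blast
  have "v \<in> positions n m" using chi_sub[OF s(1)] s(2) by blast
  moreover have "v \<in> FF n B" using s(3) by (simp add: FF_def adapt_idem)
  moreover have "v \<notin> FF n A" using s(3) assms(2) by (simp add: FF_def)
  ultimately show ?thesis using stp_FF[OF assms(1)] by blast
qed

lemma walk_char:
  "Q \<in> AD_iter n m t {P} \<longleftrightarrow> (\<exists>f. f 0 = P \<and> (\<forall>i<t. stp n m (f i) (f (Suc i))) \<and> f t = Q)"
proof (induction t arbitrary: Q)
  case 0
  then show ?case by (auto simp: AD_iter_def)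
next
  case (Suc t)
  have e: "AD_iter n m (Suc t) {P} = AD n m (AD_iter n m t {P})" by (simp add: AD_iter_def)
  show ?case
  proof
    assume "Q \<in> AD_iter n m (Suc t) {P}"
    then obtain A where A: "A \<in> AD_iter n m t {P}" "stp n m A Q" using e AD_mem by metis
    then obtain f where f: "f 0 = P" "\<forall>i<t. stp n m (f i) (f (Suc i))" "f t = A" using Suc by blast
    let ?g = "f(Suc t := Q)"
    have "?g 0 = P" using f by simp
    moreover have "\<forall>i<Suc t. stp n m (?g i) (?g (Suc i))"
      using f A by (auto simp: less_Suc_eq)
    moreover have "?g (Suc t) = Q" by simp
    ultimately show "\<exists>f. f 0 = P \<and> (\<forall>i<Suc t. stp n m (f i) (f (Suc i))) \<and> f (Suc t) = Q" by blast
  next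
    assume "\<exists>f. f 0 = P \<and> (\<forall>i<Suc t. stp n m (f i) (f (Suc i))) \<and> f (Suc t) = Q"
    then obtain f where f: "f 0 = P" "\<forall>i<Suc t. stp n m (f i) (f (Suc i))" "f (Suc t) = Q" by blast
    have "f t \<in> AD_iter n m t {P}" using Suc f by auto
    moreover have "stp n m (f t) Q" using f by auto
    ultimately show "Q \<in> AD_iter n m (Suc t) {P}" using e AD_mem by metis
  qed
qed

lemma finite_positions: "finite (positions n m)"
  unfolding positions_def by (rule finite_PiE) auto

lemma count_walk:
  assumes "\<forall>i<t. stp n m (f i) (f (Suc i))" "\<forall>i<t. f i \<noteq> f (Suc i)"
  shows "t \<le> card (positions n m)"
proof -
  have "\<forall>j\<le>t. j \<le> card (FF n (f j) \<inter> positions n m)"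
  proof (intro allI impI)
    fix j assume "j \<le> t" then show "j \<le> card (FF n (f j) \<inter> positions n m)"
    proof (induction j)
      case 0 then show ?case by simp
    next
      case (Suc j)
      have "FF n (f j) \<inter> positions n m \<subset> FF n (f (Suc j)) \<inter> positions n m"
        using stp_strict assms Suc by auto
      then have "card (FF n (f j) \<inter> positions n m) < card (FF n (f (Suc j)) \<inter> positions n m)"
        by (meson finite_positions finite_Int psubset_card_mono)
      then show ?case using Suc by simp
    qed
  qed
  then have "t \<le> card (FF n (f t) \<inter> positions n m)" by simp
  also have "\<dots> \<le> card (positions n m)" by (simp add: card_mono finite_positions)
  finally show ?thesis .
qed

lemma stab: "AD_iter n m (Suc t) {P} = AD_iter n m t {P}" if "card (positions n m) < t"
proof
  show "AD_iter n m (Suc t) {P} \<subseteq> AD_iter n m t {P}"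
  proof
    fix Q assume "Q \<in> AD_iter n m (Suc t) {P}"
    then obtain f where f: "f 0 = P" "\<forall>i<Suc t. stp n m (f i) (f (Suc i))" "f (Suc t) = Q"
      using walk_char by metis
    have "\<not> (\<forall>i<Suc t. f i \<noteq> f (Suc i))" using count_walk[OF f(2)] that by fastforce
    then obtain i where i: "i < Suc t" "f i = f (Suc i)" by blast
    define g where "g j = (if j \<le> i then f j else f (Suc j))" for j
    have "g 0 = P" using f by (simp add: g_def)
    moreover have "g t = Q"
    proof (cases "t \<le> i")
      case True then have "i = t" using i by linarith
      then show ?thesis using f i by (simp add: g_def)
    next
      case False then show ?thesis using f by (simp add: g_def)
    qed
    moreover have "\<forall>j<t. stp n m (g j) (g (Suc j))"
    proof (intro allI impI)
      fix j assume j: "j < t"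
      consider "j < i" | "j = i" | "i < j" by linarith
      then show "stp n m (g j) (g (Suc j))"
      proof cases
        case 1 then show ?thesis using f j by (simp add: g_def)
      next
        case 2 then show ?thesis using f j i by (simp add: g_def)
      next
        case 3 then show ?thesis using f j by (simp add: g_def)
      qed
    qed
    ultimately show "Q \<in> AD_iter n m t {P}" using walk_char by metis
  qed
next
  show "AD_iter n m t {P} \<subseteq> AD_iter n m (Suc t) {P}"
  proof
    fix Q assume "Q \<in> AD_iter n m t {P}"
    then obtain f where f: "f 0 = P" "\<forall>i<t. stp n m (f i) (f (Suc i))" "f t = Q"
      using walk_char by metis
    have "\<not> (\<forall>i<t. f i \<noteq> f (Suc i))" using count_walk[OF f(2)] that by fastforce
    then obtain i where i: "i < t" "f i = f (Suc i)" by blast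
    define g where "g j = (if j \<le> i then f j else f (j - 1))" for j
    have "g 0 = P" using f by (simp add: g_def)
    moreover have "g (Suc t) = Q" using f i by (auto simp: g_def)
    moreover have "\<forall>j<Suc t. stp n m (g j) (g (Suc j))"
    proof (intro allI impI)
      fix j assume j: "j < Suc t"
      consider "j < i" | "j = i" | "i < j" by linarith
      then show "stp n m (g j) (g (Suc j))"
      proof cases
        case 1 then show ?thesis using f j i by (simp add: g_def)
      next
        case 2
        have e: "g j = f i" "g (Suc j) = f i" using 2 i by (simp_all add: g_def)
        have "stp n m (f i) (f (Suc i))" using f(2) i by blast
        then show ?thesis unfolding e using i by simp
      next
        case 3
        have e: "g j = f (j - 1)" "g (Suc j) = f (Suc (j - 1))" using 3 by (simp_all add: g_def)
        have "j - 1 < t" using 3 j by linarith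
        then show ?thesis unfolding e using f(2) by blast
      qed
    qed
    ultimately show "Q \<in> AD_iter n m (Suc t) {P}" using walk_char by metis
  qed
qed

lemma AD_inf_eq: assumes "AD_length n m {P} \<le> t" shows "AD_iter n m t {P} = AD_inf n m {P}"
proof -
  let ?L = "AD_length n m {P}"
  have ex: "\<exists>t. AD_iter n m (Suc t) {P} = AD_iter n m t {P}"
    using stab[of n m "Suc (card (positions n m))"] by blast
  have L: "AD_iter n m (Suc ?L) {P} = AD_iter n m ?L {P}"
    unfolding AD_length_def by (rule LeastI_ex[OF ex])
  show ?thesis using assms
  proof (induction t rule: dec_induct)
    case base then show ?case by (simp add: AD_inf_def)
  next
    case (step t)
    have "AD_iter n m (Suc t) {P} = AD n m (AD_iter n m t {P})" by (simp add: AD_iter_def)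
    also have "\<dots> = AD n m (AD_iter n m ?L {P})" using step by (simp add: AD_inf_def)
    also have "\<dots> = AD_iter n m (Suc ?L) {P}" by (simp add: AD_iter_def)
    finally show ?case using L by (simp add: AD_inf_def)
  qed
qed

theorem corollary3:
  fixes n :: nat and m :: "nat \<Rightarrow> nat"
    and P :: "nat \<Rightarrow> (nat \<Rightarrow> nat) \<Rightarrow> nat \<Rightarrow> real"
    and xs :: "(nat \<Rightarrow> (nat \<Rightarrow> nat) \<Rightarrow> nat \<Rightarrow> real) list"
    and \<sigma> :: "nat \<Rightarrow> nat \<Rightarrow> real"
  assumes "1 \<le> n"
    and "\<forall>i \<in> {1..n}. 1 \<le> m i"
    and "maximal_path_from (adapt_edges' n m P) P xs"
    and "\<sigma> \<in> NME n m (last xs)"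
  shows "stable_ME n m P \<sigma>"
proof -
  have ne: "xs \<noteq> []" and hd: "hd xs = P"
    and edg: "\<And>i. Suc i < length xs \<Longrightarrow> (xs ! i, xs ! Suc i) \<in> adapt_edges' n m P"
    and mx: "\<not> (\<exists>w. (last xs, w) \<in> adapt_edges' n m P \<and> w \<notin> set xs)"
    using assms(3) unfolding maximal_path_from_def is_path_def by auto
  define R where "R = last xs"
  define k where "k = length xs - 1"
  have Rk: "R = xs ! k" using ne by (simp add: R_def k_def last_conv_nth)
  have stpi: "stp n m (xs ! i) (xs ! Suc i)" if "i < k" for i
  proof -
    have "Suc i < length xs" using that k_def by simp
    then have "(xs ! i, xs ! Suc i) \<in> adapt_edges n m P" using edg unfolding adapt_edges'_def by blast
    then show ?thesis unfolding adapt_edges_def stp_def by blast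
  qed
  have h0: "xs ! 0 = P" using ne hd by (simp add: hd_conv_nth)
  have Rin: "R \<in> AD_iter n m k {P}"
    unfolding walk_char
    by (rule exI[of _ "\<lambda>i. xs ! i"]) (use h0 stpi Rk in blast)
  then have Rstar: "R \<in> AD_star n m {P}" unfolding AD_star_def by blast
  have mono: "\<forall>i\<le>j. j \<le> k \<longrightarrow> FF n (xs ! i) \<subseteq> FF n (xs ! j)" for j
  proof (induction j)
    case 0 then show ?case by simp
  next
    case (Suc j)
    show ?case
    proof (intro allI impI)
      fix i assume a: "i \<le> Suc j" "Suc j \<le> k"
      have jk: "j < k" using a by simp
      have st: "FF n (xs ! j) \<subseteq> FF n (xs ! Suc j)" by (rule stp_FF[OF stpi[OF jk]])
      show "FF n (xs ! i) \<subseteq> FF n (xs ! Suc j)"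
      proof (cases "i = Suc j")
        case True then show ?thesis by simp
      next
        case False
        then have "i \<le> j" using a by simp
        then have "FF n (xs ! i) \<subseteq> FF n (xs ! j)" using Suc.IH jk by simp
        then show ?thesis using st by (rule subset_trans)
      qed
    qed
  qed
  have fixd: "\<forall>v \<in> chi n \<sigma>. adapt n v R = R"
  proof (rule ballI, rule ccontr)
    fix v assume v: "v \<in> chi n \<sigma>" and nf: "adapt n v R \<noteq> R"
    have s4: "\<sigma> \<in> NME n m R" using assms(4) R_def by simp
    have "\<exists>\<sigma>\<in>NME n m R. \<exists>w\<in>chi n \<sigma>. adapt n v R = adapt n w R"
      using s4 v by blast
    then have "(R, adapt n v R) \<in> adapt_edges n m P"
      unfolding adapt_edges_def using Rstar by simp
    then have "(R, adapt n v R) \<in> adapt_edges' n m P"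
      unfolding adapt_edges'_def using nf by simp
    then have "adapt n v R \<in> set xs" using mx unfolding R_def by blast
    then obtain j where j: "j < length xs" "xs ! j = adapt n v R" by (auto simp: in_set_conv_nth)
    have "j \<le> k" using j k_def by simp
    then have "FF n (xs ! j) \<subseteq> FF n R" using mono[of k] Rk by simp
    moreover have "v \<in> FF n (xs ! j)" using j by (simp add: FF_def adapt_idem)
    ultimately have "v \<in> FF n R" by blast
    then show False using nf by (simp add: FF_def)
  qed
  obtain v where v: "v \<in> chi n \<sigma>" using chi_ne[OF assms(4)] by blast
  have loop: "\<And>t. k \<le> t \<Longrightarrow> R \<in> AD_iter n m t {P}"
  proof -
    fix t assume "k \<le> t" then show "R \<in> AD_iter n m t {P}"
    proof (induction t rule: dec_induct)
      case base then show ?case using Rin .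
    next
      case (step t)
      have "adapt n v R = R" using fixd v by blast
      then have "stp n m R R" unfolding stp_def using assms(4) v R_def by metis
      then have "R \<in> AD n m (AD_iter n m t {P})" using step AD_mem by metis
      then show ?case by (simp add: AD_iter_def)
    qed
  qed
  have "R \<in> AD_inf n m {P}"
    using loop[of "max k (AD_length n m {P})"] AD_inf_eq[of n m P "max k (AD_length n m {P})"] by simp
  then show ?thesis unfolding stable_ME_def using assms(4) fixd R_def by blast
qed

end
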